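(* Let $n,t,m,t'$ be positive integers with $n>m$, $t'\ge \frac{t\log(n-m)}{\log n}$ and $m\ge t'+2$. Then there exist a map $\mathcal{E}:\mathcal{S}_n\to\mathcal{S}_{n+t'}$ and a decoding map $\mathcal{D}$ such that for every $\sigma\in\mathcal{S}_n$ and every sequence $\pi_e$ obtained from $\pi=\mathcal{E}(\sigma)$ by at most $t$ stuck-at errors with threshold $m$ (as defined in the context), we have $\mathcal{D}(\pi_e)=\sigma$.
   Context: $\mathcal{S}_N$ denotes the set of permutations $\pi=(\pi(1),\ldots,\pi(N))$ of $[N]=\{1,\ldots,N\}$. Stuck-at errors with threshold $m$: a sequence $\pi_e\in[N]^N$ is obtained from $\pi\in\mathcal{S}_N$ by at most $t$ stuck-at errors if there is a set $I\subseteq[N]$ with $|I|\le t$ and $\pi(i)>m$ for all $i\in I$, such that $\pi_e(i)=\pi(i)-1$ for $i\in I$ and $\pi_e(i)=\pi(i)$ for $i\in[N]\setminus I$. Logarithms are to a common base (e.g. base 2). *)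

theory Defs
  imports Complex_Main
begin

text \<open>Permutations of [N] = {1..N}, represented as lists pi = [pi(1),...,pi(N)]
  (list index i corresponds to position i+1).\<close>
definition perms :: "nat \<Rightarrow> nat list set" where
  "perms N = {p. length p = N \<and> distinct p \<and> set p = {1..N}}"

definition stuck_at :: "nat \<Rightarrow> nat \<Rightarrow> nat list \<Rightarrow> nat list \<Rightarrow> bool" where
  "stuck_at m t p pe \<longleftrightarrow> length pe = length p \<and>
     (\<exists>I. I \<subseteq> {0..<length p} \<and> card I \<le> t \<and> (\<forall>i\<in>I. p ! i > m) \<and>
          (\<forall>i<length p. pe ! i = (if i \<in> I then p ! i - 1 else p ! i)))"

end

theory Submission
  imports Defs "HOL-Combinatorics.Multiset_Permutations"
begin


definition SS :: "nat \<Rightarrow> nat \<Rightarrow> nat" where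
  "SS r x = (\<Sum>k\<le>r. x choose k)"

lemma SS_le_pow: "SS r x \<le> (x+1)^r"
proof -
  have "SS r x \<le> (\<Sum>k\<le>r. x ^ k)"
    unfolding SS_def
  proof (rule sum_mono)
    fix k assume "k \<in> {..r}"
    show "x choose k \<le> x ^ k"
      by (cases "k \<le> x") (simp_all add: binomial_le_pow binomial_eq_0)
  qed
  also have "\<dots> \<le> (\<Sum>k\<le>r. (r choose k) * x ^ k * 1 ^ (r - k))"
  proof (rule sum_mono)
    fix k assume "k \<in> {..r}"
    then have "1 \<le> r choose k" using zero_less_binomial_iff[of r k] by (simp add: Suc_le_eq)
    then show "x ^ k \<le> (r choose k) * x ^ k * 1 ^ (r - k)" by simp
  qed
  also have "\<dots> = (x+1)^r" using binomial[of x 1 r] by simp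
  finally show ?thesis .
qed

lemma SS_Suc: "SS (Suc r) (Suc x) = SS (Suc r) x + SS r x"
proof (induction r)
  case 0
  then show ?case by (simp add: SS_def)
next
  case (Suc r)
  have "SS (Suc (Suc r)) (Suc x) = SS (Suc r) (Suc x) + (Suc x choose Suc (Suc r))"
    by (simp add: SS_def)
  also have "\<dots> = SS (Suc r) x + SS r x + (x choose Suc r) + (x choose Suc (Suc r))"
    using Suc by simp
  also have "\<dots> = SS (Suc (Suc r)) x + SS (Suc r) x"
    by (simp add: SS_def)
  finally show ?case .
qed

lemma SS_shift: "SS (Suc r) (a + j) \<le> SS (Suc r) a + j * (a + j) ^ r"
proof (induction j)
  case 0 then show ?case by simp
next
  case (Suc j)
  have e: "SS (Suc r) (a + Suc j) = SS (Suc r) (a + j) + SS r (a + j)"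
    using SS_Suc[of r "a+j"] by simp
  have s: "SS r (a + j) \<le> (a + Suc j) ^ r" using SS_le_pow[of r "a+j"] by simp
  have p: "(a + j) ^ r \<le> (a + Suc j) ^ r" by (rule power_mono) simp_all
  then have p2: "j * (a + j) ^ r \<le> j * (a + Suc j) ^ r" by (rule mult_le_mono2)
  have "Suc j * (a + Suc j) ^ r = j * (a + Suc j) ^ r + (a + Suc j) ^ r" by simp
  then show ?case using e s p2 Suc.IH by linarith
qed

lemma SS_le_pow2: assumes "a \<ge> 2" "t \<ge> 2" shows "SS t a \<le> a ^ t"
  using assms(2)
proof (induction t rule: dec_induct)
  case base
  have "SS 2 a = 1 + a + (a choose 2)"
    by (simp add: SS_def numeral_2_eq_2)
  also have "\<dots> = 1 + a + a * (a - 1) div 2" by (simp add: choose_two)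
  also have "\<dots> \<le> a ^ 2"
  proof -
    obtain b where b: "a = b + 2" using assms(1) le_Suc_ex by (metis add.commute)
    have "a * (a - 1) div 2 \<le> a * (a - 1)" by simp
    have "(b+2)*(b+1) div 2 \<le> b*b + 3*b + 1" 
    proof -
      have "(b+2)*(b+1) = b*b + 3*b + 2" by (simp add: algebra_simps)
      then show ?thesis by simp
    qed
    then show ?thesis using b by (simp add: power2_eq_square algebra_simps)
  qed
  finally show ?case .
next
  case (step t)
  have "SS (Suc t) a = SS t a + (a choose Suc t)" by (simp add: SS_def)
  also have "(a choose Suc t) \<le> a * (a - 1) ^ t"
  proof -
    obtain c where c: "a = Suc c" using assms(1) by (cases a) auto
    have "Suc t * (a choose Suc t) = a * (c choose t)"
      using Suc_times_binomial[of t c] c by simp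
    also have "c choose t \<le> c ^ t" by (cases "t \<le> c") (simp_all add: binomial_le_pow binomial_eq_0)
    finally have "Suc t * (a choose Suc t) \<le> a * c ^ t" by simp
    then show ?thesis using c
      by (metis diff_Suc_1 le_trans mult_le_mono1 Suc_eq_plus1 le_add2 mult.commute mult_1)
  qed
  also have "a * (a - 1) ^ t \<le> a ^ t * (a - 1)"
  proof -
    obtain s where s: "t = Suc s" using step(1) by (cases t) auto
    have "(a - 1) ^ s \<le> a ^ s" by (simp add: power_mono)
    have "a * (a - 1) ^ t = (a * (a - 1)) * (a - 1) ^ s" using s by (simp add: ac_simps)
    also have "\<dots> \<le> (a * (a - 1)) * a ^ s" using \<open>(a - 1) ^ s \<le> a ^ s\<close> by (rule mult_le_mono2)
    also have "\<dots> = a ^ t * (a - 1)" using s by (simp add: ac_simps)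
    finally show ?thesis .
  qed
  finally have "SS (Suc t) a \<le> a ^ t + a ^ t * (a - 1)" using step by simp
  also have "\<dots> = a ^ Suc t" using assms(1)
    by (cases a) (simp_all add: algebra_simps)
  finally show ?case .
qed

lemma bern: "n ^ Suc r + Suc r * n ^ r \<le> (n + 1 :: nat) ^ Suc r"
proof (induction r)
  case 0 then show ?case by simp
next
  case (Suc r)
  have h: "(n+1) * (n ^ Suc r + Suc r * n ^ r) \<le> (n+1) * (n+1)^Suc r"
    using Suc.IH by (rule mult_le_mono2)
  have e: "(n+1) ^ Suc (Suc r) = (n+1) * (n+1)^Suc r" by (simp only: power_Suc)
  have "n ^ Suc (Suc r) + Suc (Suc r) * n ^ Suc r \<le> (n+1) * (n ^ Suc r + Suc r * n ^ r)"
    by (simp add: algebra_simps)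
  then show ?case using h e by linarith
qed

lemma fact_pow: "fact n * (n + 1) ^ r \<le> (fact (n + r) :: nat)"
proof (induction r)
  case 0 then show ?case by simp
next
  case (Suc r)
  have "fact n * (n+1) ^ Suc r = (n+1) * (fact n * (n+1)^r)" by (simp add: algebra_simps)
  also have "\<dots> \<le> (n + Suc r) * fact (n + r)" using Suc by (intro mult_le_mono) simp_all
  also have "\<dots> = fact (n + Suc r)" by simp
  finally show ?case .
qed

definition nc :: "nat set \<Rightarrow> bool" where "nc U \<longleftrightarrow> (\<forall>u\<in>U. Suc u \<notin> U)"

lemma nc_count: "card {U. U \<subseteq> {b..<b+L} \<and> card U = k \<and> nc U} \<le> (L + 1 - k) choose k"
proof (induction L arbitrary: k rule: less_induct)
  case (less L)
  define X where "X = {U. U \<subseteq> {b..<b+L} \<and> card U = k \<and> nc U}"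
  have finX: "finite X" unfolding X_def by (rule finite_subset[of _ "Pow {b..<b+L}"]) auto
  show ?case
  proof (cases "k \<le> L")
    case False
    have "X = {}"
    proof (rule ccontr)
      assume "X \<noteq> {}"
      then obtain U where "U \<subseteq> {b..<b+L}" "card U = k" unfolding X_def by auto
      then have "k \<le> L" using card_mono[of "{b..<b+L}" U] by auto
      with False show False by simp
    qed
    then have "card X = 0" by simp
    then show ?thesis unfolding X_def[symmetric] by simp
  next
    case True
    show ?thesis
    proof (cases k)
      case 0
      have "X \<subseteq> {{}}" unfolding X_def using 0 by (auto simp: card_eq_0_iff finite_subset)
      then have "card X \<le> 1" using card_mono[of "{{}}" X] by simp
      then show ?thesis using 0 unfolding X_def by simp
    next
      case (Suc k')
      then obtain M where M: "L = Suc M" using True by (cases L) auto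
      define X1 where "X1 = {U. U \<subseteq> {b..<b+M} \<and> card U = k \<and> nc U}"
      define X2 where "X2 = {U. U \<subseteq> {b..<b+(M-1)} \<and> card U = k' \<and> nc U}"
      have sub: "X \<subseteq> X1 \<union> insert (b+M) ` X2"
      proof
        fix U assume U: "U \<in> X"
        show "U \<in> X1 \<union> insert (b+M) ` X2"
        proof (cases "b + M \<in> U")
          case False
          have "U \<subseteq> {b..<b+Suc M}" using U M unfolding X_def by auto
          then have "U \<subseteq> {b..<b+M}" using False by (auto simp: subset_iff less_Suc_eq)
          then show ?thesis using U unfolding X_def X1_def by auto
        next
          case T: True
          have finU: "finite U" using U unfolding X_def by (auto intro: finite_subset)
          have "U - {b+M} \<subseteq> {b..<b+(M-1)}"
          proof
            fix u assume u: "u \<in> U - {b+M}"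
            then have "u \<in> {b..<b+Suc M}" using U M unfolding X_def by auto
            moreover have "Suc u \<noteq> b + M" using u T U unfolding X_def nc_def by auto
            ultimately show "u \<in> {b..<b+(M-1)}" using u by auto
          qed
          moreover have "card (U - {b+M}) = k'" using T finU U Suc unfolding X_def by simp
          moreover have "nc (U - {b+M})" using U unfolding X_def nc_def by auto
          ultimately have "U - {b+M} \<in> X2" unfolding X2_def by simp
          moreover have "U = insert (b+M) (U - {b+M})" using T by auto
          ultimately show ?thesis by blast
        qed
      qed
      have fin1: "finite X1" unfolding X1_def by (rule finite_subset[of _ "Pow {b..<b+M}"]) auto
      have fin2: "finite X2" unfolding X2_def by (rule finite_subset[of _ "Pow {b..<b+(M-1)}"]) auto
      have "card X \<le> card (X1 \<union> insert (b+M) ` X2)" using sub fin1 fin2 by (intro card_mono) auto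
      also have "\<dots> \<le> card X1 + card (insert (b+M) ` X2)" by (rule card_Un_le)
      also have "\<dots> \<le> card X1 + card X2" using card_image_le[OF fin2] by simp
      also have "card X1 + card X2 \<le> ((M + 1 - k) choose k) + (((M - 1) + 1 - k') choose k')"
        unfolding X1_def X2_def using less[of M k] less[of "M-1" k'] M by (intro add_mono) simp_all
      also have "((M + 1 - k) choose k) + (((M - 1) + 1 - k') choose k') = (L + 1 - k) choose k"
      proof (cases M)
        case 0
        then show ?thesis using Suc M True by simp
      next
        case (Suc M')
        have "k' \<le> M" using True M \<open>k = Suc k'\<close> by simp
        then have e1: "M + 1 - k = M - k'" and e2: "(M - 1) + 1 - k' = M - k'" and e3: "L + 1 - k = Suc (M - k')"
          using Suc M \<open>k = Suc k'\<close> by auto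
        have e4: "L - k' = Suc (M - k')" using \<open>k' \<le> M\<close> M by simp
        show ?thesis unfolding e1 e2 \<open>k = Suc k'\<close> by (simp add: e4 binomial_Suc_Suc)
      qed
      finally show ?thesis unfolding X_def .
    qed
  qed
qed

lemma final_ineq:
  fixes F :: "nat \<Rightarrow> nat"
  assumes a: "a \<ge> 1" and t: "t \<ge> 1" and tp: "tp \<ge> 1" and n: "n \<ge> a + tp + 2"
    and h: "a ^ t \<le> n ^ tp"
    and F1: "\<And>k. k \<le> t \<Longrightarrow> F k \<le> (a + tp) choose k"
    and F2: "\<And>k. tp < k \<Longrightarrow> k \<le> t \<Longrightarrow> F k \<le> a choose k"
  shows "(\<Sum>k\<le>t. F k) \<le> (n + 1) ^ tp"
proof (cases "t \<le> tp")
  case True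
  have "(\<Sum>k\<le>t. F k) \<le> SS t (a + tp)" unfolding SS_def using F1 by (intro sum_mono) auto
  also have "\<dots> \<le> (a + tp + 1) ^ t" by (rule SS_le_pow)
  also have "\<dots> \<le> (n + 1) ^ t" using n by (intro power_mono) auto
  also have "\<dots> \<le> (n + 1) ^ tp" using True by (intro power_increasing) auto
  finally show ?thesis .
next
  case False
  have split: "{..t} = {..tp} \<union> {tp<..t}" using False by auto
  have "(\<Sum>k\<le>t. F k) = (\<Sum>k\<le>tp. F k) + (\<Sum>k\<in>{tp<..t}. F k)"
    unfolding split by (rule sum.union_disjoint) auto
  also have "\<dots> \<le> SS tp (a + tp) + (\<Sum>k\<in>{tp<..t}. a choose k)"
    unfolding SS_def using F1 F2 False by (intro add_mono sum_mono) auto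
  finally have main: "(\<Sum>k\<le>t. F k) \<le> SS tp (a + tp) + (\<Sum>k\<in>{tp<..t}. a choose k)" .
  show ?thesis
  proof (cases "a = 1")
    case True
    have "(\<Sum>k\<in>{tp<..t}. a choose k) = 0" using True tp by (intro sum.neutral) auto
    then have "(\<Sum>k\<le>t. F k) \<le> SS tp (a + tp)" using main by linarith
    also have "\<dots> \<le> (a + tp + 1) ^ tp" by (rule SS_le_pow)
    also have "\<dots> \<le> (n + 1) ^ tp" using n by (intro power_mono) auto
    finally show ?thesis .
  next
    case False
    then have a2: "a \<ge> 2" using a by simp
    obtain r where r: "tp = Suc r" using tp by (cases tp) auto
    have "SS tp (a + tp) \<le> SS tp a + tp * (a + tp) ^ r" using SS_shift[of r a tp] r by simp
    moreover have "SS tp a + (\<Sum>k\<in>{tp<..t}. a choose k) = SS t a"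
    proof -
      have split: "{..t} = {..tp} \<union> {tp<..t}" using \<open>\<not> t \<le> tp\<close> by auto
      show ?thesis unfolding SS_def split by (rule sum.union_disjoint[symmetric]) auto
    qed
    moreover have "SS t a \<le> a ^ t" using a2 \<open>\<not> t \<le> tp\<close> tp by (intro SS_le_pow2) auto
    moreover have "tp * (a + tp) ^ r \<le> tp * n ^ r" using n by (intro mult_le_mono2 power_mono) auto
    ultimately have "(\<Sum>k\<le>t. F k) \<le> n ^ tp + tp * n ^ r" using main h by linarith
    also have "\<dots> \<le> (n + 1) ^ tp" using bern[of n r] r by simp
    finally show ?thesis .
  qed
qed



lemma perms_alt: "perms N = permutations_of_set {1..N}"
  unfolding perms_def permutations_of_set_def
  by (auto dest: distinct_card)

lemma card_perms: "card (perms N) = fact N"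
  unfolding perms_alt by simp

lemma finite_perms: "finite (perms N)"
  unfolding perms_alt by simp

lemma card_idx:
  assumes "distinct p"
  shows "card {j. j < length p \<and> P (p!j)} = card {v \<in> set p. P v}"
proof -
  have "{v \<in> set p. P v} = nth p ` {j. j < length p \<and> P (p!j)}"
    by (auto simp: in_set_conv_nth)
  moreover have "inj_on (nth p) {j. j < length p \<and> P (p!j)}"
    using assms by (intro inj_on_nth) auto
  ultimately show ?thesis by (simp add: card_image)
qed

lemma swap_claim:
  assumes p: "p \<in> perms N" and q: "q \<in> perms N"
    and d: "\<And>i. i < N \<Longrightarrow> q!i \<le> Suc (p!i) \<and> p!i \<le> Suc (q!i)"
  shows "(\<exists>j<N. p!j = x \<and> q!j = Suc x) \<longleftrightarrow> (\<exists>j<N. p!j = Suc x \<and> q!j = x)"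
proof -
  have lp: "length p = N" "distinct p" "set p = {1..N}" using p unfolding perms_def by auto
  have lq: "length q = N" "distinct q" "set q = {1..N}" using q unfolding perms_def by auto
  define A where "A = {j. j < N \<and> p!j \<le> x}"
  define B where "B = {j. j < N \<and> q!j \<le> x}"
  have "card A = card {v \<in> set p. v \<le> x}" unfolding A_def using card_idx[OF lp(2), of "\<lambda>v. v \<le> x"] lp(1) by simp
  moreover have "card B = card {v \<in> set q. v \<le> x}" unfolding B_def using card_idx[OF lq(2), of "\<lambda>v. v \<le> x"] lq(1) by simp
  ultimately have cAB: "card A = card B" using lp(3) lq(3) by simp
  have finA: "finite A" "finite B" unfolding A_def B_def by auto
  have AB: "A - B = {j. j < N \<and> p!j = x \<and> q!j = Suc x}"
    unfolding A_def B_def using d by (auto; fastforce)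
  have BA: "B - A = {j. j < N \<and> p!j = Suc x \<and> q!j = x}"
    unfolding A_def B_def using d by (auto; fastforce)
  have "card (A - B) = card (B - A)"
    using card_Diff_subset_Int[of A B] card_Diff_subset_Int[of B A] finA cAB
    by (simp add: Int_commute)
  moreover have "finite (A - B)" "finite (B - A)" using finA by auto
  ultimately have "(A - B = {}) \<longleftrightarrow> (B - A = {})" by (metis card_0_eq)
  then show ?thesis unfolding AB BA by blast
qed

definition Uof :: "nat list \<Rightarrow> nat list \<Rightarrow> nat set" where
  "Uof p q = {v. \<exists>j<length p. p!j = v \<and> q!j = Suc v}"

definition gdec :: "nat set \<Rightarrow> nat \<Rightarrow> nat" where
  "gdec U v = (if v \<in> U then Suc v else if v \<noteq> 0 \<and> v - 1 \<in> U then v - 1 else v)"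

lemma decode_q:
  assumes p: "p \<in> perms N" and q: "q \<in> perms N"
    and d: "\<And>i. i < N \<Longrightarrow> q!i \<le> Suc (p!i) \<and> p!i \<le> Suc (q!i)"
    and i: "i < N"
  shows "q!i = gdec (Uof p q) (p!i)"
proof -
  have lp: "length p = N" "distinct p" using p unfolding perms_def by auto
  have inj: "\<And>j. j < N \<Longrightarrow> p!j = p!i \<Longrightarrow> j = i" using lp i by (metis nth_eq_iff_index_eq)
  note sc = swap_claim[OF p q d]
  show ?thesis
  proof (cases "p!i \<in> Uof p q")
    case True
    then obtain j where "j < N" "p!j = p!i" "q!j = Suc (p!i)" unfolding Uof_def using lp by auto
    then show ?thesis using inj True unfolding gdec_def by auto
  next
    case F1: False
    show ?thesis
    proof (cases "p!i \<noteq> 0 \<and> p!i - 1 \<in> Uof p q")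
      case True
      then obtain j where "j < N" "p!j = p!i - 1" "q!j = Suc (p!i - 1)" unfolding Uof_def using lp by auto
      then obtain j' where "j' < N" "p!j' = Suc (p!i - 1)" "q!j' = p!i - 1" using sc[of "p!i - 1"] by blast
      moreover have "Suc (p!i - 1) = p!i" using True by simp
      ultimately have "j' = i" using inj by simp
      then show ?thesis using True F1 \<open>q!j' = p!i - 1\<close> unfolding gdec_def by simp
    next
      case F2: False
      have "q!i \<noteq> Suc (p!i)"
      proof
        assume "q!i = Suc (p!i)"
        then have "p!i \<in> Uof p q" unfolding Uof_def using i lp by auto
        with F1 show False by simp
      qed
      moreover have "Suc (q!i) \<noteq> p!i"
      proof
        assume h: "Suc (q!i) = p!i"
        then have "\<exists>j<N. p!j = Suc (q!i) \<and> q!j = q!i" using i by auto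
        then obtain j where "j < N" "p!j = q!i" "q!j = Suc (q!i)" using sc[of "q!i"] by blast
        then have "q!i \<in> Uof p q" unfolding Uof_def using lp by auto
        moreover have "p!i - 1 = q!i" using h by simp
        ultimately show False using F2 h by simp
      qed
      ultimately have "q!i = p!i" using d[OF i] by linarith
      then show ?thesis using F1 F2 unfolding gdec_def by auto
    qed
  qed
qed



lemma stuck_diff:
  assumes "stuck_at m t p pe" "stuck_at m t q pe" "length p = N" "i < N"
  shows "q!i \<le> Suc (p!i) \<and> p!i \<le> Suc (q!i)"
proof -
  obtain I where I: "\<forall>i\<in>I. p!i > m" "\<forall>i<length p. pe!i = (if i \<in> I then p!i - 1 else p!i)"
    using assms(1) unfolding stuck_at_def by blast
  obtain J where J: "\<forall>i\<in>J. q!i > m" "length q = length p" "\<forall>i<length q. pe!i = (if i \<in> J then q!i - 1 else q!i)"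
    using assms(1,2) unfolding stuck_at_def by (metis)
  show ?thesis using I J assms(3,4)
    by (cases "i \<in> I"; cases "i \<in> J") (fastforce+)
qed

lemma conf_refl: "stuck_at m t p p"
  unfolding stuck_at_def by (rule conjI, simp, rule exI[of _ "{}"]) simp

lemma nbr:
  assumes p: "p \<in> perms N"
  shows "card {q \<in> perms N. \<exists>pe. stuck_at m t p pe \<and> stuck_at m t q pe}
         \<le> card {U. U \<subseteq> {m..<N} \<and> card U \<le> t \<and> nc U}"
proof -
  define Q where "Q = {q \<in> perms N. \<exists>pe. stuck_at m t p pe \<and> stuck_at m t q pe}"
  define Fam where "Fam = {U. U \<subseteq> {m..<N} \<and> card U \<le> t \<and> nc U}"
  have lp: "length p = N" "distinct p" "set p = {1..N}" using p unfolding perms_def by auto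
  have finF: "finite Fam" unfolding Fam_def by (rule finite_subset[of _ "Pow {m..<N}"]) auto
  have dQ: "\<And>q i. q \<in> Q \<Longrightarrow> i < N \<Longrightarrow> q!i \<le> Suc (p!i) \<and> p!i \<le> Suc (q!i)"
    unfolding Q_def using stuck_diff lp(1) by blast
  have img: "Uof p q \<in> Fam" if qQ: "q \<in> Q" for q
  proof -
    have q: "q \<in> perms N" using qQ unfolding Q_def by auto
    have lq: "length q = N" "set q = {1..N}" using q unfolding perms_def by auto
    obtain pe where pe: "stuck_at m t p pe" "stuck_at m t q pe" using qQ unfolding Q_def by auto
    obtain I where I: "\<forall>i\<in>I. p!i > m" "\<forall>i<length p. pe!i = (if i \<in> I then p!i - 1 else p!i)"
      using pe(1) unfolding stuck_at_def by blast
    obtain J where J: "J \<subseteq> {0..<length q}" "card J \<le> t" "\<forall>i\<in>J. q!i > m"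
        "\<forall>i<length q. pe!i = (if i \<in> J then q!i - 1 else q!i)"
      using pe(2) unfolding stuck_at_def by blast
    have inJ: "j \<in> J" if "j < N" "q!j = Suc (p!j)" for j
    proof (rule ccontr)
      assume "j \<notin> J"
      then have "pe!j = q!j" using J(4) lq that by auto
      moreover have "pe!j \<le> p!j" using I(2) lp that by auto
      ultimately show False using that by simp
    qed
    have sub: "Uof p q \<subseteq> {m..<N}"
    proof
      fix v assume "v \<in> Uof p q"
      then obtain j where j: "j < N" "p!j = v" "q!j = Suc v" unfolding Uof_def using lp by auto
      then have "j \<in> J" using inJ by simp
      then have "q!j > m" using J by auto
      moreover have "q!j \<in> {1..N}" using j lq by (metis nth_mem)
      ultimately show "v \<in> {m..<N}" using j by auto
    qed
    have "Uof p q \<subseteq> nth p ` J"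
    proof
      fix v assume "v \<in> Uof p q"
      then obtain j where j: "j < N" "p!j = v" "q!j = Suc v" unfolding Uof_def using lp by auto
      then show "v \<in> nth p ` J" using inJ by force
    qed
    moreover have "finite J" using J(1) by (rule finite_subset) simp
    ultimately have "card (Uof p q) \<le> t"
      using J(2) card_image_le card_mono by (metis finite_imageI le_trans)
    moreover have "nc (Uof p q)"
      unfolding nc_def
    proof
      fix v assume "v \<in> Uof p q"
      then obtain j where j: "j < N" "p!j = v" "q!j = Suc v" unfolding Uof_def using lp by auto
      show "Suc v \<notin> Uof p q"
      proof
        assume "Suc v \<in> Uof p q"
        then obtain j' where j': "j' < N" "p!j' = Suc v" "q!j' = Suc (Suc v)" unfolding Uof_def using lp by auto
        obtain j'' where j'': "j'' < N" "p!j'' = Suc v" "q!j'' = v"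
          using swap_claim[OF p q dQ[OF qQ], of v] j by blast
        have "j'' = j'" using j' j'' lp by (metis nth_eq_iff_index_eq)
        then show False using j' j'' by simp
      qed
    qed
    ultimately show ?thesis using sub unfolding Fam_def by simp
  qed
  have "inj_on (Uof p) Q"
  proof
    fix q1 q2 assume q1: "q1 \<in> Q" and q2: "q2 \<in> Q" and e: "Uof p q1 = Uof p q2"
    have pq1: "q1 \<in> perms N" and pq2: "q2 \<in> perms N" using q1 q2 unfolding Q_def by auto
    show "q1 = q2"
    proof (rule nth_equalityI)
      show "length q1 = length q2" using pq1 pq2 unfolding perms_def by simp
      fix i assume "i < length q1"
      then have i: "i < N" using pq1 unfolding perms_def by simp
      show "q1!i = q2!i"
        using decode_q[OF p pq1 dQ[OF q1] i] decode_q[OF p pq2 dQ[OF q2] i] e by simp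
    qed
  qed
  then have "card Q \<le> card Fam"
    using img finF by (intro card_inj_on_le) auto
  then show ?thesis unfolding Q_def Fam_def .
qed

lemma greedy:
  assumes "finite V" "\<And>x. x \<in> V \<Longrightarrow> R x x" "\<And>x y. R x y \<Longrightarrow> R y x"
    "\<And>x. x \<in> V \<Longrightarrow> card {y \<in> V. R x y} \<le> K"
  shows "\<exists>S\<subseteq>V. (\<forall>x\<in>S. \<forall>y\<in>S. R x y \<longrightarrow> x = y) \<and> card V \<le> K * card S"
  using assms
proof (induction V rule: finite_psubset_induct)
  case (psubset V)
  show ?case
  proof (cases "V = {}")
    case True
    then show ?thesis by auto
  next
    case False
    then obtain x where x: "x \<in> V" by auto
    define V' where "V' = V - {y \<in> V. R x y}"
    have "V' \<subset> V" using x psubset.prems(1)[OF x] unfolding V'_def by auto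
    moreover have "\<And>z. z \<in> V' \<Longrightarrow> card {y \<in> V'. R z y} \<le> K"
    proof -
      fix z assume "z \<in> V'"
      then have "card {y \<in> V'. R z y} \<le> card {y \<in> V. R z y}"
        using psubset.hyps(1) unfolding V'_def by (intro card_mono) auto
      then show "card {y \<in> V'. R z y} \<le> K" using psubset.prems(3)[of z] \<open>z \<in> V'\<close> unfolding V'_def by auto
    qed
    ultimately obtain S' where S': "S' \<subseteq> V'" "\<forall>x\<in>S'. \<forall>y\<in>S'. R x y \<longrightarrow> x = y"
        "card V' \<le> K * card S'"
      using psubset.IH[of V'] psubset.prems psubset.hyps by (auto simp: V'_def)
    have xS: "x \<notin> S'" using S'(1) psubset.prems(1)[OF x] unfolding V'_def by auto
    have finS: "finite S'" using S'(1) psubset.hyps(1) unfolding V'_def by (auto intro: finite_subset)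
    have indep: "\<forall>u\<in>insert x S'. \<forall>v\<in>insert x S'. R u v \<longrightarrow> u = v"
      using S' psubset.prems(2) unfolding V'_def by blast
    have cle: "card {y \<in> V. R x y} \<le> card V" using psubset.hyps(1) by (intro card_mono) auto
    have "card V = card V' + card {y \<in> V. R x y}"
      unfolding V'_def using psubset.hyps(1) cle
      by (subst card_Diff_subset) auto
    also have "\<dots> \<le> K * card S' + K" using S'(3) psubset.prems(3)[OF x] by simp
    also have "\<dots> = K * card (insert x S')" using xS finS by simp
    finally have cv: "card V \<le> K * card (insert x S')" .
    have sub: "insert x S' \<subseteq> V" using S'(1) x unfolding V'_def by auto
    show ?thesis by (intro exI[of _ "insert x S'"] conjI) (rule sub, rule indep, rule cv)
  qed
qed



lemma pow_from_log:
  fixes n t m t' :: nat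
  assumes "n > m" "m > 0"
    and h: "real t' \<ge> real t * ln (real (n - m)) / ln (real n)"
  shows "(n - m) ^ t \<le> n ^ t'"
proof -
  have n2: "real n > 1" using assms by simp
  have lnpos: "ln (real n) > 0" using n2 by simp
  have a0: "real (n - m) > 0" using assms by simp
  have "real t * ln (real (n - m)) \<le> real t' * ln (real n)"
    using h lnpos by (simp add: pos_divide_le_eq)
  then have "ln (real (n - m) ^ t) \<le> ln (real n ^ t')"
    using a0 n2 by (simp add: ln_realpow)
  then have "real (n - m) ^ t \<le> real n ^ t'"
    using a0 n2 by (subst (asm) ln_le_cancel_iff) auto
  then show ?thesis by (metis of_nat_le_iff of_nat_power)
qed

theorem theorem1:
  fixes n t m t' :: nat
  assumes "n > 0" "t > 0" "m > 0" "t' > 0"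
    and "n > m"
    and "real t' \<ge> real t * ln (real (n - m)) / ln (real n)"
    and "m \<ge> t' + 2"
  shows "\<exists>(E :: nat list \<Rightarrow> nat list) (D :: nat list \<Rightarrow> nat list).
           (\<forall>\<sigma>\<in>perms n. E \<sigma> \<in> perms (n + t')) \<and>
           (\<forall>\<sigma>\<in>perms n. \<forall>pe. stuck_at m t (E \<sigma>) pe \<longrightarrow> D pe = \<sigma>)"
proof -
  define N where "N = n + t'"
  define a where "a = n - m"
  have a1: "a \<ge> 1" using assms unfolding a_def by simp
  have na: "n \<ge> a + t' + 2" using assms unfolding a_def by simp
  have pw: "a ^ t \<le> n ^ t'" unfolding a_def using pow_from_log[OF assms(5) assms(3) assms(6)] .
  define Fam where "Fam = {U. U \<subseteq> {m..<N} \<and> card U \<le> t \<and> nc U}"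
  define Fk where "Fk k = {U. U \<subseteq> {m..<m+(a+t')} \<and> card U = k \<and> nc U}" for k
  have NI: "{m..<N} = {m..<m+(a+t')}" unfolding N_def a_def using assms by simp
  have finF: "finite Fam" unfolding Fam_def by (rule finite_subset[of _ "Pow {m..<N}"]) auto
  have "Fam = (\<Union>k\<in>{..t}. Fk k)" unfolding Fam_def Fk_def NI by auto
  then have "card Fam \<le> (\<Sum>k\<le>t. card (Fk k))" by (simp add: card_UN_le)
  also have "\<dots> \<le> (n + 1) ^ t'"
  proof (rule final_ineq[OF a1 _ _ na pw])
    show "1 \<le> t" "1 \<le> t'" using assms by auto
  next
    fix k assume "k \<le> t"
    have "Fk k \<subseteq> {B. B \<subseteq> {m..<m+(a+t')} \<and> card B = k}" unfolding Fk_def by auto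
    then have "card (Fk k) \<le> card {B. B \<subseteq> {m..<m+(a+t')} \<and> card B = k}"
      by (intro card_mono) (auto intro: finite_subset[of _ "Pow {m..<m+(a+t')}"])
    also have "\<dots> = (a + t') choose k" by (simp add: n_subsets)
    finally show "card (Fk k) \<le> (a + t') choose k" .
  next
    fix k assume k: "t' < k" "k \<le> t"
    have "card (Fk k) \<le> (a + t' + 1 - k) choose k" unfolding Fk_def by (rule nc_count)
    also have "\<dots> \<le> a choose k" using k by (intro binomial_right_mono) simp
    finally show "card (Fk k) \<le> a choose k" .
  qed
  finally have Kb: "card Fam \<le> (n + 1) ^ t'" .
  have "fact n * card Fam \<le> fact n * (n + 1) ^ t'" using Kb by simp
  also have "\<dots> \<le> fact N" unfolding N_def by (rule fact_pow)
  finally have KN: "fact n * card Fam \<le> fact N" .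
  define R where "R p q \<longleftrightarrow> (\<exists>pe. stuck_at m t p pe \<and> stuck_at m t q pe)" for p q
  obtain S where S: "S \<subseteq> perms N" "\<forall>x\<in>S. \<forall>y\<in>S. R x y \<longrightarrow> x = y"
      "card (perms N) \<le> card Fam * card S"
  proof -
    have "\<exists>S\<subseteq>perms N. (\<forall>x\<in>S. \<forall>y\<in>S. R x y \<longrightarrow> x = y) \<and> card (perms N) \<le> card Fam * card S"
    proof (rule greedy)
      show "finite (perms N)" by (rule finite_perms)
      show "\<And>x. x \<in> perms N \<Longrightarrow> R x x" unfolding R_def using conf_refl by blast
      show "\<And>x y. R x y \<Longrightarrow> R y x" unfolding R_def by blast
      show "\<And>x. x \<in> perms N \<Longrightarrow> card {y \<in> perms N. R x y} \<le> card Fam"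
        unfolding R_def Fam_def by (rule nbr)
    qed
    then show ?thesis using that by blast
  qed
  have "{} \<in> Fam" unfolding Fam_def nc_def by simp
  then have K0: "card Fam > 0" using finF by (auto simp: card_gt_0_iff)
  have "fact N \<le> card S * card Fam" using S(3) card_perms[of N] by (simp add: mult.commute)
  then have "fact n * card Fam \<le> card S * card Fam" using KN by linarith
  then have "fact n \<le> card S" using K0 by simp
  then have "card (perms n) \<le> card S" by (simp add: card_perms)
  moreover have "finite S" using S(1) finite_perms by (rule finite_subset)
  ultimately obtain E where E: "E ` perms n \<subseteq> S" "inj_on E (perms n)"
    using card_le_inj[OF finite_perms] by blast
  define D where "D pe = (SOME \<sigma>. \<sigma> \<in> perms n \<and> stuck_at m t (E \<sigma>) pe)" for pe
  have "\<forall>\<sigma>\<in>perms n. E \<sigma> \<in> perms (n + t')" using E(1) S(1) unfolding N_def by blast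
  moreover have "\<forall>\<sigma>\<in>perms n. \<forall>pe. stuck_at m t (E \<sigma>) pe \<longrightarrow> D pe = \<sigma>"
  proof (intro ballI allI impI)
    fix \<sigma> pe assume s: "\<sigma> \<in> perms n" and st: "stuck_at m t (E \<sigma>) pe"
    have ex: "\<exists>\<tau>. \<tau> \<in> perms n \<and> stuck_at m t (E \<tau>) pe" using s st by blast
    have "D pe \<in> perms n \<and> stuck_at m t (E (D pe)) pe"
      unfolding D_def by (rule someI_ex[OF ex])
    then have d1: "D pe \<in> perms n" and d2: "stuck_at m t (E (D pe)) pe" by auto
    have "R (E \<sigma>) (E (D pe))" unfolding R_def using st d2 by blast
    moreover have "E \<sigma> \<in> S" "E (D pe) \<in> S" using E(1) s d1 by auto
    ultimately have "E \<sigma> = E (D pe)" using S(2) by blast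
    then show "D pe = \<sigma>" using E(2) s d1 by (metis inj_onD)
  qed
  ultimately show ?thesis by blast
qed


end
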